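(* Let $\mathcal{K}$ be a finite-dimensional complex Hilbert space with inner product $\langle\cdot,\cdot\rangle$, let $S$ be a strictly positive operator on $\mathcal{K}$, let $\mathcal{K}_0\subset\mathcal{K}$ be a linear subspace with basis $\{e_i\}_{i=1}^d$, and define $d\times d$ matrices $K^{(1)}_{ij}=\langle e_i,Se_j\rangle$, $K^{(2)}_{ij}=\langle e_i,e_j\rangle$, $K^{(3)}_{ij}=\langle e_i,S^{-1}e_j\rangle$. Then the following are equivalent: (i) $S(\mathcal{K}_0)=\mathcal{K}_0$; (ii) $(K^{(3)})^{-1}=(K^{(2)})^{-1}K^{(1)}(K^{(2)})^{-1}$. *)

theory Defs
  imports "HOL-Analysis.Analysis"
begin

text \<open>Standard inner product on the finite-dimensional complex Hilbert space complex^'n,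
  conjugate-linear in the first argument.\<close>
definition cinner :: "complex^'n \<Rightarrow> complex^'n \<Rightarrow> complex" where
  "cinner x y = (\<Sum>k\<in>UNIV. cnj (x $ k) * y $ k)"

text \<open>Strictly positive operator: the quadratic form is a strictly positive real
  number on every nonzero vector.\<close>
definition strictly_positive :: "complex^'n^'n \<Rightarrow> bool" where
  "strictly_positive S \<longleftrightarrow>
     (\<forall>x. x \<noteq> 0 \<longrightarrow> Im (cinner x (S *v x)) = 0 \<and> Re (cinner x (S *v x)) > 0)"

end

theory Submission
  imports Defs
begin


definition cadj :: "complex^'n^'m \<Rightarrow> complex^'m^'n" where
  "cadj A = (\<chi> i j. cnj (A $ j $ i))"

lemma cadj_mult: "cadj (A ** B) = cadj B ** cadj A"
  by (simp add: vec_eq_iff matrix_matrix_mult_def cadj_def cnj_sum mult.commute)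

lemma cadj_cadj[simp]: "cadj (cadj A) = A"
  by (simp add: vec_eq_iff cadj_def)

lemma cadj_mat1[simp]: "cadj (mat 1) = mat 1"
  by (simp add: vec_eq_iff cadj_def mat_def)

lemma cadj_diff: "cadj (A - B) = cadj A - cadj B"
  by (simp add: vec_eq_iff cadj_def)

lemma mm_diff_left: "(A - B) ** C = A ** C - B ** (C::complex^_^_)"
  by (simp add: vec_eq_iff matrix_matrix_mult_def sum_subtractf left_diff_distrib)

lemma mm_diff_right: "C ** (A - B) = C ** A - C ** (B::complex^_^_)"
  by (simp add: vec_eq_iff matrix_matrix_mult_def sum_subtractf right_diff_distrib)

lemma column_mult: "column j (A ** B) = A *v column j B"
  by (simp add: vec_eq_iff column_def matrix_matrix_mult_def matrix_vector_mult_def)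

lemma cadj_entry: "(cadj E ** B) $ i $ j = cinner (column i E) (column j B)"
proof -
  have "(cadj E ** B) $ i $ j = (\<Sum>k\<in>UNIV. cnj (E $ k $ i) * B $ k $ j)"
    by (simp add: matrix_matrix_mult_def cadj_def)
  also have "\<dots> = cinner (column i E) (column j B)"
    by (simp add: cinner_def column_def)
  finally show ?thesis .
qed

lemma cinner_adj: "cinner x (cadj E *v y) = cinner (E *v x) y"
proof -
  have "cinner x (cadj E *v y) = (\<Sum>k\<in>UNIV. \<Sum>l\<in>UNIV. cnj (x$k) * (cnj (E$l$k) * y$l))"
    by (simp add: cinner_def cadj_def matrix_vector_mult_def sum_distrib_left)
  also have "\<dots> = (\<Sum>l\<in>UNIV. \<Sum>k\<in>UNIV. cnj (x$k) * (cnj (E$l$k) * y$l))"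
    by (rule sum.swap)
  also have "\<dots> = cinner (E *v x) y"
    by (simp add: cinner_def matrix_vector_mult_def cnj_sum sum_distrib_left mult_ac)
  finally show ?thesis .
qed

lemma cinner_add_left: "cinner (x + y) z = cinner x z + cinner y z"
  by (simp add: cinner_def sum.distrib ring_distribs)
lemma cinner_add_right: "cinner z (x + y) = cinner z x + cinner z y"
  by (simp add: cinner_def sum.distrib ring_distribs)
lemma cinner_scale_left: "cinner (c *s x) z = cnj c * cinner x z"
  by (simp add: cinner_def sum_distrib_left mult_ac)
lemma cinner_scale_right: "cinner z (c *s x) = c * cinner z x"
  by (simp add: cinner_def sum_distrib_left mult_ac)
lemma cinner_zero_left[simp]: "cinner 0 z = 0"
  by (simp add: cinner_def)
lemma cinner_axis: "cinner (axis i 1) (S *v axis j 1) = S $ i $ j"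
  unfolding cinner_def matrix_vector_mult_def axis_def by (simp add: if_distrib if_distribR cong: if_cong)

lemma matrix_vector_scale: "A *v (c *s x) = c *s (A *v (x::complex^_))"
  by (simp add: vec_eq_iff matrix_vector_mult_def sum_distrib_left mult_ac)

lemma matrix_inv_props:
  assumes "invertible (A::complex^'n^'n)"
  shows "A ** matrix_inv A = mat 1" "matrix_inv A ** A = mat 1"
  using someI_ex[OF assms[unfolded invertible_def]] unfolding matrix_inv_def by auto

lemma matrix_inv_unique:
  assumes "invertible (A::complex^'n^'n)" "B ** A = mat 1"
  shows "matrix_inv A = B"
proof -
  have "B = B ** (A ** matrix_inv A)" using matrix_inv_props(1)[OF assms(1)] by simp
  also have "\<dots> = matrix_inv A" by (simp add: matrix_mul_assoc assms(2))
  finally show ?thesis by simp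
qed

lemma invertible_matrix_inv:
  assumes "invertible (A::complex^'n^'n)" shows "invertible (matrix_inv A)"
  using matrix_inv_props[OF assms] unfolding invertible_def by blast

lemma cadj_inv:
  assumes "invertible (A::complex^'n^'n)" "cadj A = A"
  shows "cadj (matrix_inv A) = matrix_inv A"
proof -
  have "cadj (matrix_inv A) ** A = mat 1"
  proof -
    have "cadj (matrix_inv A) ** A = cadj (A ** matrix_inv A)"
      using assms(2) by (simp add: cadj_mult)
    also have "\<dots> = mat 1" using matrix_inv_props(1)[OF assms(1)] by simp
    finally show ?thesis .
  qed
  from matrix_inv_unique[OF assms(1) this] show ?thesis by (rule sym)
qed

lemma invertible_ker:
  fixes A :: "complex^'n^'n"
  assumes "\<And>x. A *v x = 0 \<Longrightarrow> x = 0"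
  shows "invertible A"
  using assms matrix_left_invertible_ker invertible_left_inverse by blast

lemma quad_add: "cinner (x + y) (S *v (x + y)) =
   cinner x (S *v x) + cinner y (S *v y) + cinner x (S *v y) + cinner y (S *v x)"
  by (simp add: matrix_vector_right_distrib cinner_add_left cinner_add_right)

lemma herm_aux:
  "Im (cinner (x+y) (S *v (x+y))) = 0 \<Longrightarrow> Im (cinner x (S *v x)) = 0 \<Longrightarrow> Im (cinner y (S *v y)) = 0
   \<Longrightarrow> Im (cinner x (S *v y) + cinner y (S *v x)) = 0"
  unfolding quad_add by simp

lemma sp_herm:
  assumes "strictly_positive S"
  shows "cadj S = S"
proof -
  have im: "Im (cinner x (S *v x)) = 0" for x
    using assms unfolding strictly_positive_def by (cases "x = 0") auto
  have "cnj (S $ j $ i) = S $ i $ j" for i j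
  proof -
    let ?x = "axis i (1::complex)" and ?y = "axis j (1::complex)"
    have "Im (cinner ?x (S *v ?y) + cinner ?y (S *v ?x)) = 0"
      by (rule herm_aux) (rule im)+
    hence 1: "Im (S $ i $ j + S $ j $ i) = 0"
      by (simp only: cinner_axis)
    have "Im (cinner ?x (S *v (\<i> *s ?y)) + cinner (\<i> *s ?y) (S *v ?x)) = 0"
      by (rule herm_aux) (rule im)+
    hence "Im (\<i> * S $ i $ j + cnj \<i> * S $ j $ i) = 0"
      by (simp only: matrix_vector_scale cinner_scale_left cinner_scale_right cinner_axis)
    hence 2: "Re (S $ i $ j) = Re (S $ j $ i)"
      by simp
    have 3: "Im (S $ j $ i) = - Im (S $ i $ j)" using 1 by simp
    show ?thesis using 2 3 by (simp add: complex_eq_iff)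
  qed
  thus ?thesis by (simp add: vec_eq_iff cadj_def)
qed

lemma cinner_adj2: "cinner (A *v x) y = cinner x (cadj A *v y)"
  by (subst cinner_adj) simp

lemma cinner_zero_right[simp]: "cinner z 0 = 0"
  by (simp add: cinner_def)

lemma cols_eq: "(\<And>j. column j A = column j B) \<Longrightarrow> A = B"
  by (simp add: vec_eq_iff column_def)

lemma E_mult:
  fixes e :: "'d::finite \<Rightarrow> complex^'n"
  shows "(\<chi> k j. e j $ k) *v c = (\<Sum>j\<in>UNIV. c $ j *s e j)"
  by (simp add: vec_eq_iff matrix_vector_mult_def sum_component mult.commute)

lemma sum_range_inj:
  fixes e :: "'d::finite \<Rightarrow> complex^'n"
  assumes "inj e"
  shows "(\<Sum>v\<in>range e. u v *s v) = (\<Sum>j\<in>UNIV. u (e j) *s e j)"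
  using sum.reindex[OF assms, of "\<lambda>v. u v *s v"] by (simp add: o_def)

lemma E_span:
  fixes e :: "'d::finite \<Rightarrow> complex^'n"
  assumes "inj e"
  shows "vec.span (range e) = range (\<lambda>c. (\<chi> k j. e j $ k) *v c)"
proof -
  have "vec.span (range e) = range (\<lambda>u. \<Sum>v\<in>range e. u v *s v)"
    by (rule vec.span_finite) simp
  also have "\<dots> = range (\<lambda>c. (\<chi> k j. e j $ k) *v c)"
  proof (intro set_eqI iffI)
    fix x assume "x \<in> range (\<lambda>u. \<Sum>v\<in>range e. u v *s v)"
    then obtain u where x: "x = (\<Sum>v\<in>range e. u v *s v)" by blast
    have "x = (\<chi> k j. e j $ k) *v (\<chi> j. u (e j))"
      unfolding x E_mult sum_range_inj[OF assms] by simp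
    then show "x \<in> range (\<lambda>c. (\<chi> k j. e j $ k) *v c)" by blast
  next
    fix x assume "x \<in> range (\<lambda>c. (\<chi> k j. e j $ k) *v c)"
    then obtain c where x: "x = (\<chi> k j. e j $ k) *v c" by blast
    have "x = (\<Sum>v\<in>range e. (\<lambda>v. c $ inv e v) v *s v)"
      unfolding x E_mult sum_range_inj[OF assms] by (simp add: inv_f_f[OF assms])
    then show "x \<in> range (\<lambda>u. \<Sum>v\<in>range e. u v *s v)"
      by (intro image_eqI[where x="\<lambda>v. c $ inv e v"]) auto
  qed
  finally show ?thesis .
qed

lemma E_inj:
  fixes e :: "'d::finite \<Rightarrow> complex^'n"
  assumes "inj e" "vec.independent (range e)" "(\<chi> k j. e j $ k) *v c = 0"
  shows "c = 0"
proof -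
  have "(\<Sum>v\<in>range e. (\<lambda>v. c $ inv e v) v *s v) = 0"
    using assms(3) unfolding E_mult sum_range_inj[OF assms(1)] by (simp add: inv_f_f[OF assms(1)])
  moreover have ind: "\<And>u. (\<Sum>v\<in>range e. u v *s v) = 0 \<Longrightarrow> \<forall>v\<in>range e. u v = 0"
    using assms(2) vec.independent_explicit by blast
  ultimately have "\<forall>v\<in>range e. c $ inv e v = 0" by simp
  then show ?thesis by (simp add: vec_eq_iff inv_f_f[OF assms(1)])
qed

lemma cinner_self0: "cinner x x = 0 \<Longrightarrow> x = 0"
proof -
  assume h: "cinner x x = 0"
  have ceq: "cinner x x = complex_of_real (\<Sum>k\<in>UNIV. (cmod (x $ k))^2)"
    unfolding cinner_def of_real_sum
    by (rule sum.cong) (auto simp: complex_norm_square mult.commute simp del: of_real_power)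
  have "(\<Sum>k\<in>UNIV. (cmod (x $ k))^2) = 0" using h ceq by (metis of_real_eq_0_iff)
  then have "\<forall>k\<in>UNIV. (cmod (x $ k))^2 = 0"
    by (subst sum_nonneg_eq_0_iff[symmetric]) auto
  then show "x = 0" by (simp add: vec_eq_iff)
qed



theorem lemma10:
  fixes S :: "complex^'n^'n" and e :: "'d::finite \<Rightarrow> complex^'n"
  assumes "strictly_positive S"
    and "inj e" and "vec.independent (range e)"
  defines "K0 \<equiv> vec.span (range e)"
    and "K1 \<equiv> (\<chi> i j. cinner (e i) (S *v e j)) :: complex^'d^'d"
    and "K2 \<equiv> (\<chi> i j. cinner (e i) (e j)) :: complex^'d^'d"
    and "K3 \<equiv> (\<chi> i j. cinner (e i) (matrix_inv S *v e j)) :: complex^'d^'d"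
  shows "(\<lambda>x. S *v x) ` K0 = K0 \<longleftrightarrow>
         matrix_inv K3 = matrix_inv K2 ** K1 ** matrix_inv K2"
proof -
  define E where "E = ((\<chi> k j. e j $ k) :: complex^'d^'n)"
  define Si where "Si = matrix_inv S"
  have colE: "column j E = e j" for j by (simp add: E_def column_def)
  have Einj: "E *v c = 0 \<Longrightarrow> c = 0" for c
    using E_inj[OF assms(2,3)] unfolding E_def by blast
  have K0E: "K0 = range (\<lambda>c. E *v c)"
    unfolding K0_def E_def by (rule E_span[OF assms(2)])
  have eK0: "e j \<in> K0" for j
    unfolding K0_def by (rule vec.span_base) simp
  have herm: "cadj S = S" by (rule sp_herm[OF assms(1)])
  have Snz: "cinner x (S *v x) = 0 \<Longrightarrow> x = 0" for x
    using assms(1) unfolding strictly_positive_def by force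
  have invS: "invertible S"
    by (rule invertible_ker) (use Snz in force)
  have SSi: "S ** Si = mat 1" "Si ** S = mat 1"
    using matrix_inv_props[OF invS] by (simp_all add: Si_def)
  have hermi: "cadj Si = Si" by (simp add: Si_def cadj_inv invS herm)
  have Sinz: "x = 0" if h: "cinner x (Si *v x) = 0" for x
  proof -
    let ?y = "Si *v x"
    have xy: "x = S *v ?y" by (simp add: matrix_vector_mul_assoc SSi)
    have "cinner ?y (S *v ?y) = cinner (S *v ?y) ?y" by (simp add: cinner_adj2 herm)
    then have "cinner ?y (S *v ?y) = 0" using h xy by metis
    then have "?y = 0" by (rule Snz)
    then show "x = 0" using xy by simp
  qed
  have gram: "invertible (cadj E ** A ** E)" if hA: "\<And>x. cinner x (A *v x) = 0 \<Longrightarrow> x = 0" for A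
  proof (rule invertible_ker)
    fix c assume "(cadj E ** A ** E) *v c = 0"
    then have "cinner c ((cadj E ** A ** E) *v c) = 0" by simp
    hence "cinner (E *v c) (A *v (E *v c)) = 0"
      by (simp only: matrix_vector_mul_assoc[symmetric] cinner_adj)
    then have "E *v c = 0" by (rule hA)
    then show "c = 0" by (rule Einj)
  qed
  have K1E: "K1 = cadj E ** S ** E"
    unfolding K1_def by (simp add: vec_eq_iff matrix_mul_assoc[symmetric] cadj_entry column_mult colE)
  have K2E: "K2 = cadj E ** E"
    unfolding K2_def by (simp add: vec_eq_iff cadj_entry colE)
  have K3E: "K3 = cadj E ** Si ** E"
    unfolding K3_def Si_def by (simp add: vec_eq_iff matrix_mul_assoc[symmetric] cadj_entry column_mult colE)
  have invK1: "invertible K1" unfolding K1E by (rule gram) (rule Snz)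
  have "invertible (cadj E ** mat 1 ** E)" by (rule gram) (simp add: cinner_self0)
  then have invK2: "invertible K2" unfolding K2E by simp
  have invK3: "invertible K3" unfolding K3E by (rule gram) (rule Sinz)
  have hK1: "cadj K1 = K1" by (simp add: K1E cadj_mult herm matrix_mul_assoc)
  have hK2: "cadj K2 = K2" by (simp add: K2E cadj_mult)
  note i1 = matrix_inv_props[OF invK1] and i2 = matrix_inv_props[OF invK2]
    and i3 = matrix_inv_props[OF invK3]
  show ?thesis
  proof
    assume h: "(\<lambda>x. S *v x) ` K0 = K0"
    have "\<exists>c. S *v e j = E *v c" for j
    proof -
      have "S *v e j \<in> K0" using h eK0 by blast
      then show ?thesis unfolding K0E by blast
    qed
    then obtain cM where cM: "\<And>j. S *v e j = E *v cM j" by metis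
    have "\<exists>c. Si *v e j = E *v c" for j
    proof -
      have "e j \<in> (\<lambda>x. S *v x) ` K0" using h eK0 by simp
      then obtain c where "e j = S *v (E *v c)" unfolding K0E by blast
      then have "Si *v e j = (Si ** S) *v (E *v c)" by (simp only: matrix_vector_mul_assoc matrix_mul_assoc)
      then have "Si *v e j = E *v c" using SSi by simp
      then show ?thesis by blast
    qed
    then obtain cN where cN: "\<And>j. Si *v e j = E *v cN j" by metis
    define M where "M = ((\<chi> i j. cM j $ i) :: complex^'d^'d)"
    define N where "N = ((\<chi> i j. cN j $ i) :: complex^'d^'d)"
    have colM: "column j M = cM j" for j by (simp add: M_def column_def vec_eq_iff)
    have colN: "column j N = cN j" for j by (simp add: N_def column_def vec_eq_iff)
    have SE: "S ** E = E ** M"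
      by (rule cols_eq) (simp only: column_mult colE cM colM)
    have SiE: "Si ** E = E ** N"
      by (rule cols_eq) (simp only: column_mult colE cN colN)
    have EMN: "E ** (M ** N) = E"
    proof -
      have "E ** (M ** N) = S ** E ** N" by (simp add: SE matrix_mul_assoc)
      also have "\<dots> = S ** (Si ** E)" by (simp add: SiE matrix_mul_assoc)
      also have "\<dots> = E" by (simp add: matrix_mul_assoc SSi)
      finally show ?thesis .
    qed
    have MN: "M ** N = mat 1"
    proof (subst matrix_eq, intro allI)
      fix x
      have "E *v ((M ** N) *v x - x) = 0"
        using EMN by (simp add: matrix_vector_mult_diff_distrib matrix_vector_mul_assoc)
      then show "(M ** N) *v x = mat 1 *v x" using Einj by force
    qed
    then have NM: "N ** M = mat 1" using matrix_left_right_inverse by blast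
    have K1M: "K1 = K2 ** M" by (simp add: K1E K2E SE matrix_mul_assoc[symmetric])
    have K3N: "K3 = K2 ** N" by (simp add: K3E K2E SiE matrix_mul_assoc[symmetric])
    have "matrix_inv K3 = M ** matrix_inv K2"
    proof (rule matrix_inv_unique[OF invK3])
      have "M ** matrix_inv K2 ** K3 = M ** (matrix_inv K2 ** K2) ** N"
        by (simp add: K3N matrix_mul_assoc)
      also have "\<dots> = mat 1" using i2 MN by simp
      finally show "M ** matrix_inv K2 ** K3 = mat 1" .
    qed
    also have "\<dots> = matrix_inv K2 ** K1 ** matrix_inv K2"
      using i2 by (simp add: K1M matrix_mul_assoc)
    finally show "matrix_inv K3 = matrix_inv K2 ** K1 ** matrix_inv K2" .
  next
    assume h: "matrix_inv K3 = matrix_inv K2 ** K1 ** matrix_inv K2"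
    define iK1 where "iK1 = matrix_inv K1"
    define iK2 where "iK2 = matrix_inv K2"
    have hiK1: "cadj iK1 = iK1" by (simp add: iK1_def cadj_inv invK1 hK1)
    have K3eq: "K3 = K2 ** iK1 ** K2"
    proof -
      have "matrix_inv K3 ** (K2 ** iK1 ** K2) = mat 1"
      proof -
        have "matrix_inv K3 ** (K2 ** iK1 ** K2) = iK2 ** K1 ** (iK2 ** K2) ** iK1 ** K2"
          by (simp add: h iK2_def matrix_mul_assoc)
        also have "\<dots> = iK2 ** (K1 ** iK1) ** K2"
          using i2 by (simp add: iK2_def matrix_mul_assoc)
        also have "\<dots> = mat 1" using i1 i2 by (simp add: iK1_def iK2_def)
        finally show ?thesis .
      qed
      then have "K3 = K3 ** (matrix_inv K3 ** (K2 ** iK1 ** K2))" by simp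
      also have "\<dots> = K2 ** iK1 ** K2" using i3 by (simp add: matrix_mul_assoc)
      finally show ?thesis .
    qed
    define M where "M = iK1 ** K2"
    define G where "G = Si ** E - E ** M"
    have cM: "cadj M = K2 ** iK1" by (simp add: M_def cadj_mult hK2 hiK1)
    have cG: "cadj G = cadj E ** Si - K2 ** iK1 ** cadj E"
      by (simp add: G_def cadj_diff cadj_mult hermi cM)
    have T1: "cadj E ** Si ** S ** (Si ** E) = K3"
    proof -
      have "cadj E ** Si ** S ** (Si ** E) = cadj E ** (Si ** S) ** Si ** E"
        by (simp add: matrix_mul_assoc)
      then show ?thesis using SSi by (simp add: K3E)
    qed
    have T2: "cadj E ** Si ** S ** (E ** M) = K3"
    proof -
      have "cadj E ** Si ** S ** (E ** M) = cadj E ** (Si ** S) ** E ** M"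
        by (simp add: matrix_mul_assoc)
      then show ?thesis using SSi by (simp add: K3eq K2E M_def matrix_mul_assoc)
    qed
    have T3: "K2 ** iK1 ** cadj E ** S ** (Si ** E) = K3"
    proof -
      have "K2 ** iK1 ** cadj E ** S ** (Si ** E) = K2 ** iK1 ** cadj E ** (S ** Si) ** E"
        by (simp add: matrix_mul_assoc)
      then show ?thesis using SSi by (simp add: K3eq K2E matrix_mul_assoc)
    qed
    have T4: "K2 ** iK1 ** cadj E ** S ** (E ** M) = K3"
    proof -
      have "K2 ** iK1 ** cadj E ** S ** (E ** M) = K2 ** (iK1 ** K1) ** M"
        by (simp add: matrix_mul_assoc K1E)
      then show ?thesis using i1 by (simp add: K3eq M_def iK1_def matrix_mul_assoc)
    qed
    have G0: "cadj G ** S ** G = 0"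
      unfolding cG by (simp add: G_def mm_diff_left mm_diff_right T1 T2 T3 T4)
    have "G = 0"
    proof (rule cols_eq)
      fix j
      have "cinner (column j G) (S *v column j G) = (cadj G ** (S ** G)) $ j $ j"
        by (simp add: cadj_entry column_mult)
      also have "\<dots> = 0" using G0 by (simp add: matrix_mul_assoc)
      finally have "column j G = 0" by (rule Snz)
      then show "column j G = column j 0" by (simp add: column_def vec_eq_iff)
    qed
    then have SiE: "Si ** E = E ** M" by (simp add: G_def)
    have invM: "invertible M" unfolding M_def iK1_def
      by (rule invertible_mult[OF invertible_matrix_inv[OF invK1] invK2])
    define Mi where "Mi = matrix_inv M"
    note iM = matrix_inv_props[OF invM]
    have SEM: "S ** E ** M = E"
      by (simp add: matrix_mul_assoc[symmetric] SiE[symmetric]) (simp add: matrix_mul_assoc SSi)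
    have SE: "S ** E = E ** Mi"
    proof -
      have "S ** E = S ** E ** (M ** Mi)" using iM by (simp add: Mi_def)
      also have "\<dots> = E ** Mi" by (simp add: matrix_mul_assoc SEM)
      finally show ?thesis .
    qed
    show "(\<lambda>x. S *v x) ` K0 = K0"
      unfolding K0E
    proof (intro set_eqI iffI)
      fix x assume "x \<in> (\<lambda>x. S *v x) ` range ((*v) E)"
      then obtain c where "x = S *v (E *v c)" by blast
      then have "x = E *v (Mi *v c)" by (simp add: matrix_vector_mul_assoc SE)
      then show "x \<in> range ((*v) E)" by blast
    next
      fix x assume "x \<in> range ((*v) E)"
      then obtain c where "x = E *v c" by blast
      then have "x = S *v (E *v (M *v c))"
        by (simp only: matrix_vector_mul_assoc matrix_mul_assoc SEM)
      then show "x \<in> (\<lambda>x. S *v x) ` range ((*v) E)" by blast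
    qed
  qed
qed

end
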